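(* Let $\gamma\in\mathcal{N}_G\cap\mathcal{N}_L$ be semisimple and suppose $v\in V$ satisfies $\gamma v=\zeta v$ for some $\zeta\in K^\times$. Let $\bar v=\pi(v)\in E$ and write $\bar v=\bar v_1\oplus\bar v_2\oplus\cdots$ with $\bar v_i\in E_i$. Then for each $i$, $\bar\gamma_i(\bar v_i)=\zeta^i\bar v_i$, where $\bar\gamma_i$ is the image of $\gamma$ in $\mathrm{GL}(E_i)$.
   Context: Let $K$ be an algebraically closed field of characteristic $0$, $V$ a finite-dimensional $K$-vector space, $G\subset\mathrm{GL}(V)$ a finite group generated by (pseudo)reflections and $L$ a normal subgroup of $G$. Let $S$ be the graded algebra of polynomial functions on $V$, with $\mathrm{GL}(V)$ acting by $(gf)(v)=f(g^{-1}v)$; $A_+$ denotes the positive-degree part of a graded algebra $A$. Let $\mathcal{N}_G,\mathcal{N}_L$ be the normalisers of $G$, $L$ in $\mathrm{GL}(V)$. Let $E^*$ be an $\mathcal{N}_L$-stable graded complement to $(S^L_+)^2$ in $S^L_+$, and $E=\oplus_i E_i$ its graded dual, where $E_i$ is dual to the degree-$i$ part of $E^*$. Let $(Q_1,\dots,Q_s)$ be a homogeneous basis of $E^*$ with dual basis $(e_1,\dots,e_s)$ of $E$, and let $\pi:V\to E$, $\pi(v)=\sum_j Q_j(v)e_j$ (this factors through a closed embedding $V/L\hookrightarrow E$). $\bar G=G/L$ acts on $E$; assume it acts as a group generated by reflections. *)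

theory Defs
  imports "HOL-Analysis.Analysis"
begin

text \<open>Setting: K = type 'k (field of characteristic 0, algebraically closed by hypothesis),
V = 'k^'n, GL(V) = invertible matrices, acting on V by matrix-vector multiplication.\<close>

definition alg_closed_field :: "'k::field itself \<Rightarrow> bool" where
  "alg_closed_field _ \<longleftrightarrow> (\<forall>p::'k poly. degree p \<ge> 1 \<longrightarrow> (\<exists>x. poly p x = 0))"

text \<open>Generic generated submonoid (for finite groups this is the generated subgroup).\<close>
inductive_set generated :: "('a \<Rightarrow> 'a \<Rightarrow> 'a) \<Rightarrow> 'a \<Rightarrow> 'a set \<Rightarrow> 'a set"
  for mult :: "'a \<Rightarrow> 'a \<Rightarrow> 'a" and one :: 'a and R :: "'a set" where
  gen_one: "one \<in> generated mult one R"
| gen_mult: "x \<in> R \<Longrightarrow> y \<in> generated mult one R \<Longrightarrow> mult x y \<in> generated mult one R"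

text \<open>Finite subgroups of GL(V).\<close>
definition finite_matrix_group :: "('k::field^'n^'n) set \<Rightarrow> bool" where
  "finite_matrix_group G \<longleftrightarrow> finite G \<and> mat 1 \<in> G \<and> (\<forall>g\<in>G. invertible g) \<and>
     (\<forall>g\<in>G. \<forall>h\<in>G. g ** h \<in> G) \<and> (\<forall>g\<in>G. matrix_inv g \<in> G)"

text \<open>Pseudo-reflection on V: g \<noteq> 1 and g - 1 has rank one.\<close>
definition pseudo_reflection :: "'k::field^'n^'n \<Rightarrow> bool" where
  "pseudo_reflection g \<longleftrightarrow> invertible g \<and> g \<noteq> mat 1 \<and>
     (\<exists>a b::'k^'n. \<forall>v. g *v v = v + (\<Sum>i\<in>UNIV. b$i * v$i) *s a)"

definition reflection_group :: "('k::field^'n^'n) set \<Rightarrow> bool" where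
  "reflection_group G \<longleftrightarrow> finite_matrix_group G \<and>
     G = generated (**) (mat 1) {g\<in>G. pseudo_reflection g}"

definition normal_subgroup :: "('k::field^'n^'n) set \<Rightarrow> ('k^'n^'n) set \<Rightarrow> bool" where
  "normal_subgroup L G \<longleftrightarrow> finite_matrix_group L \<and> L \<subseteq> G \<and>
     (\<forall>g\<in>G. \<forall>l\<in>L. g ** l ** matrix_inv g \<in> L)"

text \<open>Normaliser of a set of matrices in GL(V).\<close>
definition normaliser :: "('k::field^'n^'n) set \<Rightarrow> ('k^'n^'n) set" where
  "normaliser G = {\<gamma>. invertible \<gamma> \<and> (\<lambda>g. \<gamma> ** g ** matrix_inv \<gamma>) ` G = G}"

text \<open>Semisimple = diagonalisable (K algebraically closed).\<close>
definition semisimple :: "'k::field^'n^'n \<Rightarrow> bool" where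
  "semisimple \<gamma> \<longleftrightarrow> (\<exists>P::'k^'n^'n. invertible P \<and>
     (\<forall>i j. i \<noteq> j \<longrightarrow> (P ** \<gamma> ** matrix_inv P) $ i $ j = 0))"

text \<open>Linear span (over 'k) of a set of 'k-valued functions.\<close>
definition spanK :: "('a \<Rightarrow> 'k::field) set \<Rightarrow> ('a \<Rightarrow> 'k) set" where
  "spanK A = {f. \<exists>B c. finite B \<and> B \<subseteq> A \<and> f = (\<lambda>x. \<Sum>b\<in>B. c b * b x)}"

text \<open>Polynomial functions on V: S, and its homogeneous parts S_d.\<close>
definition monomial_fn :: "('n::finite \<Rightarrow> nat) \<Rightarrow> 'k::field^'n \<Rightarrow> 'k" where
  "monomial_fn \<alpha> v = (\<Prod>i\<in>UNIV. (v$i) ^ \<alpha> i)"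

definition polyfns :: "('k::field^'n::finite \<Rightarrow> 'k) set" where
  "polyfns = spanK (range monomial_fn)"

definition hom_polyfns :: "nat \<Rightarrow> ('k::field^'n::finite \<Rightarrow> 'k) set" where
  "hom_polyfns d = spanK {monomial_fn \<alpha> | \<alpha>. (\<Sum>i\<in>UNIV. \<alpha> i) = d}"

text \<open>Action (g f)(v) = f(g^{-1} v).\<close>
definition act :: "'k::field^'n^'n \<Rightarrow> ('k^'n \<Rightarrow> 'k) \<Rightarrow> ('k^'n \<Rightarrow> 'k)" where
  "act g f = (\<lambda>v. f (matrix_inv g *v v))"

definition invariants :: "('k::field^'n::finite^'n) set \<Rightarrow> ('k^'n \<Rightarrow> 'k) set" where
  "invariants L = {f\<in>polyfns. \<forall>g\<in>L. act g f = f}"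

text \<open>Positive-degree part S^L_+ and its square (S^L_+)^2.\<close>
definition inv_plus :: "('k::field^'n::finite^'n) set \<Rightarrow> ('k^'n \<Rightarrow> 'k) set" where
  "inv_plus L = spanK (\<Union>d\<in>{d. d > 0}. hom_polyfns d \<inter> invariants L)"

definition inv_plus_sq :: "('k::field^'n::finite^'n) set \<Rightarrow> ('k^'n \<Rightarrow> 'k) set" where
  "inv_plus_sq L = spanK {(\<lambda>x. f x * g x) | f g. f \<in> inv_plus L \<and> g \<in> inv_plus L}"

definition subspaceK :: "('a \<Rightarrow> 'k::field) set \<Rightarrow> bool" where
  "subspaceK W \<longleftrightarrow> (\<lambda>x. 0) \<in> W \<and> (\<forall>f\<in>W. \<forall>g\<in>W. \<forall>a b. (\<lambda>x. a * f x + b * g x) \<in> W)"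

text \<open>E* is an N_L-stable graded complement to (S^L_+)^2 in S^L_+.\<close>
definition graded_complement :: "('k::field^'n::finite^'n) set \<Rightarrow> ('k^'n \<Rightarrow> 'k) set \<Rightarrow> bool" where
  "graded_complement L Es \<longleftrightarrow> subspaceK Es \<and> Es \<subseteq> inv_plus L \<and>
     Es \<subseteq> spanK (\<Union>d. Es \<inter> hom_polyfns d) \<and>
     Es \<inter> inv_plus_sq L = {\<lambda>x. 0} \<and>
     inv_plus L = {(\<lambda>x. f x + g x) | f g. f \<in> Es \<and> g \<in> inv_plus_sq L}"

text \<open>The (graded) dual E of E*: linear functionals on E*, extended by 0 outside E*.\<close>
definition dualsp :: "('a \<Rightarrow> 'k::field) set \<Rightarrow> (('a \<Rightarrow> 'k) \<Rightarrow> 'k) set" where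
  "dualsp Es = {\<phi>. (\<forall>f. f \<notin> Es \<longrightarrow> \<phi> f = 0) \<and>
     (\<forall>f\<in>Es. \<forall>g\<in>Es. \<forall>a b. \<phi> (\<lambda>x. a * f x + b * g x) = a * \<phi> f + b * \<phi> g)}"

text \<open>E_i: the part of E dual to the degree-i part of E* (kills the other degrees).\<close>
definition dual_part :: "('k::field^'n::finite \<Rightarrow> 'k) set \<Rightarrow> nat \<Rightarrow> (('k^'n \<Rightarrow> 'k) \<Rightarrow> 'k) set" where
  "dual_part Es i = {\<phi>\<in>dualsp Es. \<forall>d f. d \<noteq> i \<longrightarrow> f \<in> Es \<inter> hom_polyfns d \<longrightarrow> \<phi> f = 0}"

text \<open>Contragredient action of \<gamma> on E: (\<gamma> \<phi>)(Q) = \<phi>(\<gamma>^{-1} Q).\<close>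
definition dual_act :: "('k::field^'n::finite \<Rightarrow> 'k) set \<Rightarrow> 'k^'n^'n \<Rightarrow> (('k^'n \<Rightarrow> 'k) \<Rightarrow> 'k) \<Rightarrow> (('k^'n \<Rightarrow> 'k) \<Rightarrow> 'k)" where
  "dual_act Es \<gamma> \<phi> = (\<lambda>f. if f \<in> Es then \<phi> (act (matrix_inv \<gamma>) f) else 0)"

text \<open>Pseudo-reflections of E (linear maps \<rho> with \<rho> - 1 of rank one).\<close>
definition dual_reflection :: "('a \<Rightarrow> 'k::field) set \<Rightarrow> ((('a \<Rightarrow> 'k) \<Rightarrow> 'k) \<Rightarrow> (('a \<Rightarrow> 'k) \<Rightarrow> 'k)) \<Rightarrow> bool" where
  "dual_reflection Es \<rho> \<longleftrightarrow> (\<exists>\<phi>\<in>dualsp Es. \<rho> \<phi> \<noteq> \<phi>) \<and>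
     (\<exists>a\<in>dualsp Es. \<exists>\<alpha>.
        (\<forall>\<phi>\<in>dualsp Es. \<forall>\<psi>\<in>dualsp Es. \<forall>s t. \<alpha> (\<lambda>f. s * \<phi> f + t * \<psi> f) = s * \<alpha> \<phi> + t * \<alpha> \<psi>) \<and>
        (\<forall>\<phi>\<in>dualsp Es. \<rho> \<phi> = (\<lambda>f. \<phi> f + \<alpha> \<phi> * a f)))"

text \<open>G/L acts on E as a group generated by reflections.\<close>
definition quotient_acts_as_reflection_group ::
  "('k::field^'n::finite^'n) set \<Rightarrow> ('k^'n \<Rightarrow> 'k) set \<Rightarrow> bool" where
  "quotient_acts_as_reflection_group G Es \<longleftrightarrow>
    (let H = (\<lambda>\<gamma>. restrict (dual_act Es \<gamma>) (dualsp Es)) ` G in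
     H = generated (\<lambda>x y. compose (dualsp Es) x y) (restrict id (dualsp Es))
            {\<rho>\<in>H. dual_reflection Es \<rho>})"

end

theory Submission imports Defs begin

lemma minv: fixes A :: "'k::field^'n^'n" assumes "invertible A"
  shows "A ** matrix_inv A = mat 1" "matrix_inv A ** A = mat 1"
  using someI_ex[OF assms[unfolded invertible_def]] unfolding matrix_inv_def by auto

lemma minv_inv: fixes A :: "'k::field^'n^'n" assumes "invertible A"
  shows "invertible (matrix_inv A)" "matrix_inv (matrix_inv A) = A"
proof -
  show i: "invertible (matrix_inv A)" using minv[OF assms] unfolding invertible_def by blast
  have "matrix_inv (matrix_inv A) = (A ** matrix_inv A) ** matrix_inv (matrix_inv A)"
    using minv[OF assms] by simp
  also have "... = A ** (matrix_inv A ** matrix_inv (matrix_inv A))" by (simp add: matrix_mul_assoc)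
  also have "... = A" using minv[OF i] by simp
  finally show "matrix_inv (matrix_inv A) = A" .
qed

lemma normaliser_inv: fixes \<gamma> :: "'k::field^'n^'n"
  assumes "\<gamma> \<in> normaliser L" shows "matrix_inv \<gamma> \<in> normaliser L"
proof -
  have inv: "invertible \<gamma>" and im: "(\<lambda>g. \<gamma> ** g ** matrix_inv \<gamma>) ` L = L"
    using assms unfolding normaliser_def by auto
  note m = minv[OF inv] minv_inv[OF inv]
  have c1: "matrix_inv \<gamma> ** (\<gamma> ** g ** matrix_inv \<gamma>) ** \<gamma> = g" for g
  proof -
    have "matrix_inv \<gamma> ** (\<gamma> ** g ** matrix_inv \<gamma>) ** \<gamma> = (matrix_inv \<gamma> ** \<gamma>) ** g ** (matrix_inv \<gamma> ** \<gamma>)"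
      by (simp add: matrix_mul_assoc)
    thus ?thesis using m(2) by simp
  qed
  have "(\<lambda>g. matrix_inv \<gamma> ** g ** matrix_inv (matrix_inv \<gamma>)) ` L = L"
  proof
    show "(\<lambda>g. matrix_inv \<gamma> ** g ** matrix_inv (matrix_inv \<gamma>)) ` L \<subseteq> L"
    proof
      fix x assume "x \<in> (\<lambda>g. matrix_inv \<gamma> ** g ** matrix_inv (matrix_inv \<gamma>)) ` L"
      then obtain l where l: "l \<in> L" "x = matrix_inv \<gamma> ** l ** \<gamma>" using m by auto
      then obtain g where "g \<in> L" "l = \<gamma> ** g ** matrix_inv \<gamma>" using im by blast
      thus "x \<in> L" using l c1[of g] by simp
    qed
    show "L \<subseteq> (\<lambda>g. matrix_inv \<gamma> ** g ** matrix_inv (matrix_inv \<gamma>)) ` L"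
    proof
      fix g assume "g \<in> L"
      hence "\<gamma> ** g ** matrix_inv \<gamma> \<in> L" using im by blast
      thus "g \<in> (\<lambda>g. matrix_inv \<gamma> ** g ** matrix_inv (matrix_inv \<gamma>)) ` L"
        using c1[of g] m(4) by (metis (no_types, lifting) image_eqI)
    qed
  qed
  thus ?thesis using m unfolding normaliser_def by auto
qed

lemma spanK_sub: "a \<in> A \<Longrightarrow> a \<in> spanK A"
  unfolding spanK_def by (rule CollectI, rule exI[of _ "{a}"], rule exI[of _ "\<lambda>_. 1"]) auto

lemma spanK_zero: "(\<lambda>x. 0) \<in> spanK A"
  unfolding spanK_def by (rule CollectI, rule exI[of _ "{}"]) auto

lemma spanK_lin: assumes "f \<in> spanK A" "g \<in> spanK A"
  shows "(\<lambda>x. a * f x + b * g x) \<in> spanK A"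
proof -
  obtain B c where B: "finite B" "B \<subseteq> A" "f = (\<lambda>x. \<Sum>b\<in>B. c b * b x)" using assms(1) unfolding spanK_def by auto
  obtain B' c' where B': "finite B'" "B' \<subseteq> A" "g = (\<lambda>x. \<Sum>b\<in>B'. c' b * b x)" using assms(2) unfolding spanK_def by auto
  let ?d = "\<lambda>y. a * (if y \<in> B then c y else 0) + b * (if y \<in> B' then c' y else 0)"
  have "(\<lambda>x. a * f x + b * g x) = (\<lambda>x. \<Sum>y\<in>B \<union> B'. ?d y * y x)"
  proof
    fix x
    have e1: "(\<Sum>b\<in>B. c b * b x) = (\<Sum>b\<in>B \<union> B'. (if b \<in> B then c b else 0) * b x)"
      by (rule sum.mono_neutral_cong_left) (use B B' in auto)
    have e2: "(\<Sum>b\<in>B'. c' b * b x) = (\<Sum>b\<in>B \<union> B'. (if b \<in> B' then c' b else 0) * b x)"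
      by (rule sum.mono_neutral_cong_left) (use B B' in auto)
    show "a * f x + b * g x = (\<Sum>y\<in>B \<union> B'. ?d y * y x)"
      unfolding B(3) B'(3) e1 e2 sum_distrib_left sum.distrib[symmetric]
      by (rule sum.cong) (auto simp: distrib_right)
  qed
  note eq = this
  show ?thesis unfolding spanK_def
    by (rule CollectI, rule exI[of _ "B \<union> B'"], rule exI[of _ ?d]) (use B B' eq in auto)
qed

lemma spanK_sum: assumes "finite K" "\<forall>k\<in>K. h k \<in> spanK A"
  shows "(\<lambda>x. \<Sum>k\<in>K. c k * h k x) \<in> spanK A"
  using assms
proof (induction K rule: finite_induct)
  case empty then show ?case using spanK_zero by simp
next
  case (insert k K)
  have "(\<lambda>x. c k * h k x + 1 * (\<Sum>k\<in>K. c k * h k x)) \<in> spanK A"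
    using spanK_lin[of "h k" A "\<lambda>x. \<Sum>k\<in>K. c k * h k x" "c k" 1] insert by auto
  thus ?case using insert by simp
qed


lemma mono_mult: "monomial_fn \<alpha> x * monomial_fn \<beta> x = monomial_fn (\<lambda>i. \<alpha> i + \<beta> i) x"
  unfolding monomial_fn_def by (simp add: power_add prod.distrib)

lemma spanK_eq: "f \<in> spanK A \<Longrightarrow> f = g \<Longrightarrow> g \<in> spanK A" by simp

lemma hom_mono_mult: assumes "b \<in> {monomial_fn \<alpha> | \<alpha>. (\<Sum>i\<in>UNIV. \<alpha> i) = d1}"
  "b' \<in> {monomial_fn \<alpha> | \<alpha>. (\<Sum>i\<in>UNIV. \<alpha> i) = d2}"
  shows "(\<lambda>x. b x * b' x) \<in> hom_polyfns (d1 + d2)"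
proof -
  obtain \<alpha> \<beta> where ab: "b = monomial_fn \<alpha>" "(\<Sum>i\<in>UNIV. \<alpha> i) = d1"
     "b' = monomial_fn \<beta>" "(\<Sum>i\<in>UNIV. \<beta> i) = d2" using assms by auto
  have "monomial_fn (\<lambda>i. \<alpha> i + \<beta> i) \<in> {monomial_fn \<alpha> | \<alpha>. (\<Sum>i\<in>UNIV. \<alpha> i) = d1 + d2}"
    using ab by (auto simp: sum.distrib)
  hence "monomial_fn (\<lambda>i. \<alpha> i + \<beta> i) \<in> hom_polyfns (d1 + d2)"
    unfolding hom_polyfns_def by (rule spanK_sub)
  moreover have "(\<lambda>x. b x * b' x) = monomial_fn (\<lambda>i. \<alpha> i + \<beta> i)"
    using ab mono_mult by auto
  ultimately show ?thesis by simp
qed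

lemma hom_mult: assumes "f \<in> hom_polyfns d1" "g \<in> hom_polyfns d2"
  shows "(\<lambda>x. f x * g x) \<in> hom_polyfns (d1 + d2)"
proof -
  obtain B c where B: "finite B" "B \<subseteq> {monomial_fn \<alpha> | \<alpha>. (\<Sum>i\<in>UNIV. \<alpha> i) = d1}" "f = (\<lambda>x. \<Sum>b\<in>B. c b * b x)"
    using assms(1) unfolding hom_polyfns_def spanK_def by auto
  obtain B' c' where B': "finite B'" "B' \<subseteq> {monomial_fn \<alpha> | \<alpha>. (\<Sum>i\<in>UNIV. \<alpha> i) = d2}" "g = (\<lambda>x. \<Sum>b\<in>B'. c' b * b x)"
    using assms(2) unfolding hom_polyfns_def spanK_def by auto
  have bg: "(\<lambda>x. b x * g x) \<in> hom_polyfns (d1 + d2)" if "b \<in> B" for b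
  proof -
    have "\<forall>b'\<in>B'. (\<lambda>x. b x * b' x) \<in> hom_polyfns (d1 + d2)"
      using hom_mono_mult[of b d1 _ d2] B(2) B'(2) that by blast
    from spanK_sum[OF B'(1) this[unfolded hom_polyfns_def], of c']
    have "(\<lambda>x. \<Sum>b'\<in>B'. c' b' * (b x * b' x)) \<in> hom_polyfns (d1 + d2)"
      unfolding hom_polyfns_def .
    moreover have "(\<lambda>x. \<Sum>b'\<in>B'. c' b' * (b x * b' x)) = (\<lambda>x. b x * g x)"
      unfolding B'(3) by (simp add: sum_distrib_left mult.left_commute)
    ultimately show ?thesis by simp
  qed
  have "\<forall>b\<in>B. (\<lambda>x. b x * g x) \<in> hom_polyfns (d1 + d2)" using bg by blast
  from spanK_sum[OF B(1) this[unfolded hom_polyfns_def], of c]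
  have "(\<lambda>x. \<Sum>b\<in>B. c b * (b x * g x)) \<in> hom_polyfns (d1 + d2)"
    unfolding hom_polyfns_def by blast
  moreover have "(\<lambda>x. \<Sum>b\<in>B. c b * (b x * g x)) = (\<lambda>x. f x * g x)"
    unfolding B(3) by (simp add: sum_distrib_right mult.assoc)
  ultimately show ?thesis by simp
qed

lemma hom_const: "(\<lambda>x::'k::field^'n::finite. 1::'k) \<in> hom_polyfns 0"
proof -
  have eq: "(\<lambda>x::'k::field^'n::finite. 1::'k) = monomial_fn (\<lambda>_. 0)" unfolding monomial_fn_def by auto
  show ?thesis unfolding eq hom_polyfns_def by (rule spanK_sub) auto
qed

lemma hom_coord: "(\<lambda>x::'k::field^'n::finite. x$j) \<in> hom_polyfns 1"
proof -
  have eq: "(\<lambda>x::'k::field^'n::finite. x$j) = monomial_fn (\<lambda>i. if i = j then 1 else 0)"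
  proof
    fix v :: "'k^'n"
    have "(\<Prod>i\<in>UNIV. v $ i ^ (if i = j then 1 else 0)) = (\<Prod>i\<in>UNIV. if i = j then v$i else 1)"
      by (rule prod.cong) auto
    thus "v$j = monomial_fn (\<lambda>i. if i = j then 1 else 0) v" unfolding monomial_fn_def by simp
  qed
  show ?thesis unfolding eq hom_polyfns_def
    by (rule spanK_sub, rule CollectI, rule exI[of _ "\<lambda>i. if i = j then 1 else 0"]) auto
qed

lemma hom_linear: "(\<lambda>x::'k::field^'n. \<Sum>j\<in>UNIV. a j * x$j) \<in> hom_polyfns 1"
  using spanK_sum[of UNIV "\<lambda>j x. x$j" "{monomial_fn \<alpha> | \<alpha>. (\<Sum>i\<in>UNIV. \<alpha> i) = (1::nat)}" a]
    hom_coord unfolding hom_polyfns_def by auto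

lemma hom_pow: "f \<in> hom_polyfns 1 \<Longrightarrow> (\<lambda>x. f x ^ n) \<in> hom_polyfns n"
proof (induction n)
  case 0 then show ?case using hom_const by simp
next
  case (Suc n)
  then show ?case using hom_mult[of f 1 "\<lambda>x. f x ^ n" n] by simp
qed

lemma hom_prod: "finite I \<Longrightarrow> (\<forall>i\<in>I. l i \<in> hom_polyfns 1) \<Longrightarrow>
  (\<lambda>x. \<Prod>i\<in>I. l i x ^ \<alpha> i) \<in> hom_polyfns (\<Sum>i\<in>I. \<alpha> i)"
proof (induction I rule: finite_induct)
  case empty then show ?case using hom_const by simp
next
  case (insert i I)
  then show ?case using hom_mult[OF hom_pow[of "l i" "\<alpha> i"]] by simp
qed

lemma hom_subst: assumes "f \<in> hom_polyfns d"
  shows "(\<lambda>x. f (M *v x)) \<in> hom_polyfns d"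
proof -
  obtain B c where B: "finite B" "B \<subseteq> {monomial_fn \<alpha> | \<alpha>. (\<Sum>i\<in>UNIV. \<alpha> i) = d}" "f = (\<lambda>x. \<Sum>b\<in>B. c b * b x)"
    using assms unfolding hom_polyfns_def spanK_def by auto
  have bM: "(\<lambda>x. b (M *v x)) \<in> hom_polyfns d" if bB: "b \<in> B" for b
  proof -
    obtain \<alpha> where a: "b = monomial_fn \<alpha>" "(\<Sum>i\<in>UNIV. \<alpha> i) = d" using B(2) bB by auto
    have "(\<lambda>x. \<Prod>i\<in>UNIV. (\<lambda>i x. \<Sum>j\<in>UNIV. M$i$j * x$j) i x ^ \<alpha> i) \<in> hom_polyfns (\<Sum>i\<in>UNIV. \<alpha> i)"
    proof (rule hom_prod)
      show "\<forall>i\<in>UNIV. (\<lambda>i x. \<Sum>j\<in>UNIV. M$i$j * x$j) i \<in> hom_polyfns 1"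
      proof
        fix i show "(\<lambda>i x. \<Sum>j\<in>UNIV. M$i$j * x$j) i \<in> hom_polyfns 1"
          using hom_linear[of "\<lambda>j. M$i$j"] by simp
      qed
    qed simp
    moreover have "(\<lambda>x. \<Prod>i\<in>UNIV. (\<lambda>i x. \<Sum>j\<in>UNIV. M$i$j * x$j) i x ^ \<alpha> i) = (\<lambda>x. b (M *v x))"
      unfolding a monomial_fn_def by (auto simp: matrix_vector_mult_def)
    ultimately show ?thesis using a by simp
  qed
  have "(\<lambda>x. \<Sum>b\<in>B. c b * (\<lambda>x. b (M *v x)) x) \<in> hom_polyfns d"
    unfolding hom_polyfns_def
    by (rule spanK_sum) (use B(1) bM in \<open>auto simp: hom_polyfns_def\<close>)
  moreover have "(\<lambda>x. \<Sum>b\<in>B. c b * (\<lambda>x. b (M *v x)) x) = (\<lambda>x. f (M *v x))"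
    unfolding B(3) by auto
  ultimately show ?thesis by simp
qed

lemma hom_scale: assumes "f \<in> hom_polyfns d"
  shows "f (t *s x) = t ^ d * f x"
proof -
  obtain B c where B: "finite B" "B \<subseteq> {monomial_fn \<alpha> | \<alpha>. (\<Sum>i\<in>UNIV. \<alpha> i) = d}" "f = (\<lambda>x. \<Sum>b\<in>B. c b * b x)"
    using assms unfolding hom_polyfns_def spanK_def by auto
  have "b (t *s x) = t ^ d * b x" if bB: "b \<in> B" for b
  proof -
    obtain \<alpha> where a: "b = monomial_fn \<alpha>" "(\<Sum>i\<in>UNIV. \<alpha> i) = d" using B(2) bB by auto
    show ?thesis unfolding a(1) monomial_fn_def a(2)[symmetric]
      by (simp add: power_mult_distrib prod.distrib power_sum)
  qed
  hence "(\<Sum>b\<in>B. c b * b (t *s x)) = (\<Sum>b\<in>B. t ^ d * (c b * b x))"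
    by (intro sum.cong) auto
  thus ?thesis unfolding B(3) by (simp add: sum_distrib_left)
qed


lemma dual_sum: assumes "subspaceK Es" "\<phi> \<in> dualsp Es" "finite K" "\<forall>k\<in>K. h k \<in> Es"
  shows "(\<lambda>x. \<Sum>k\<in>K. c k * h k x) \<in> Es \<and> \<phi> (\<lambda>x. \<Sum>k\<in>K. c k * h k x) = (\<Sum>k\<in>K. c k * \<phi> (h k))"
  using assms(3,4)
proof (induction K rule: finite_induct)
  case empty
  have z: "(\<lambda>x. 0) \<in> Es" using assms(1) unfolding subspaceK_def by auto
  have lin: "\<forall>f\<in>Es. \<forall>g\<in>Es. \<forall>a b. \<phi> (\<lambda>x. a * f x + b * g x) = a * \<phi> f + b * \<phi> g"
    using assms(2) unfolding dualsp_def by blast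
  show ?case using lin[rule_format, OF z z, of 0 0] z by simp
next
  case (insert k K)
  let ?S = "\<lambda>x. \<Sum>k\<in>K. c k * h k x"
  have hk: "h k \<in> Es" and S: "?S \<in> Es" "\<phi> ?S = (\<Sum>k\<in>K. c k * \<phi> (h k))" using insert by auto
  have cl: "\<forall>f\<in>Es. \<forall>g\<in>Es. \<forall>a b. (\<lambda>x. a * f x + b * g x) \<in> Es"
    using assms(1) unfolding subspaceK_def by blast
  have lin: "\<forall>f\<in>Es. \<forall>g\<in>Es. \<forall>a b. \<phi> (\<lambda>x. a * f x + b * g x) = a * \<phi> f + b * \<phi> g"
    using assms(2) unfolding dualsp_def by blast
  have "(\<lambda>x. c k * h k x + 1 * ?S x) \<in> Es" using cl[rule_format, OF hk S(1), of "c k" 1] .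
  moreover have "\<phi> (\<lambda>x. c k * h k x + 1 * ?S x) = c k * \<phi> (h k) + 1 * \<phi> ?S"
    using lin[rule_format, OF hk S(1), of "c k" 1] .
  ultimately show ?case using insert S by simp
qed

theorem proposition8p9:
  fixes G L :: "('k::field_char_0 ^ 'n::finite ^ 'n) set"
    and Es :: "('k ^ 'n \<Rightarrow> 'k) set"
    and s :: nat and Q :: "nat \<Rightarrow> ('k ^ 'n \<Rightarrow> 'k)"
    and e :: "nat \<Rightarrow> (('k ^ 'n \<Rightarrow> 'k) \<Rightarrow> 'k)"
    and D :: nat and w :: "nat \<Rightarrow> (('k ^ 'n \<Rightarrow> 'k) \<Rightarrow> 'k)"
    and \<gamma> :: "'k ^ 'n ^ 'n" and v :: "'k ^ 'n" and \<zeta> :: 'k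
  assumes "alg_closed_field TYPE('k)"
    and "reflection_group G"
    and "normal_subgroup L G"
    and "graded_complement L Es"
    and "\<forall>\<delta>\<in>normaliser L. \<forall>f\<in>Es. act \<delta> f \<in> Es"
    and "\<forall>j<s. Q j \<in> Es \<and> (\<exists>d. Q j \<in> hom_polyfns d)"
    and "\<forall>c. (\<lambda>x. \<Sum>j<s. c j * Q j x) = (\<lambda>x. 0) \<longrightarrow> (\<forall>j<s. c j = 0)"
    and "\<forall>f\<in>Es. \<exists>c. f = (\<lambda>x. \<Sum>j<s. c j * Q j x)"
    and "\<forall>j<s. e j \<in> dualsp Es \<and> (\<forall>k<s. e j (Q k) = (if j = k then 1 else 0))"
    and "quotient_acts_as_reflection_group G Es"
    and "\<gamma> \<in> normaliser G \<inter> normaliser L"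
    and "semisimple \<gamma>"
    and "\<zeta> \<noteq> 0"
    and "\<gamma> *v v = \<zeta> *s v"
    and "\<forall>i\<le>D. w i \<in> dual_part Es i"
    and "(\<lambda>f. \<Sum>j<s. Q j v * e j f) = (\<lambda>f. \<Sum>i\<le>D. w i f)"
  shows "\<forall>i\<le>D. dual_act Es \<gamma> (w i) = (\<lambda>f. \<zeta> ^ i * w i f)"
proof -
  have sub: "subspaceK Es" and gsp: "Es \<subseteq> spanK (\<Union>d. Es \<inter> hom_polyfns d)"
    using assms(4) unfolding graded_complement_def by auto
  have gL: "\<gamma> \<in> normaliser L" using assms(11) by auto
  hence inv: "invertible \<gamma>" unfolding normaliser_def by auto
  have actg: "act (matrix_inv \<gamma>) f = (\<lambda>x. f (\<gamma> *v x))" for f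
    unfolding act_def using minv_inv[OF inv] by simp
  have Esg: "(\<lambda>x. f (\<gamma> *v x)) \<in> Es" if "f \<in> Es" for f
    using assms(5) normaliser_inv[OF gL] that actg by metis
  have wd: "w i \<in> dualsp Es" if "i \<le> D" for i using assms(15) that unfolding dual_part_def by auto
  (* Fact E *)
  have E: "(\<Sum>i\<le>D. w i g) = g v" if gE: "g \<in> Es" for g
  proof -
    obtain c where c: "g = (\<lambda>x. \<Sum>j<s. c j * Q j x)" using assms(8) gE by blast
    have ej: "e j g = c j" if "j < s" for j
    proof -
      have "e j g = (\<Sum>k<s. c k * e j (Q k))"
        using dual_sum[OF sub _ _ , of "e j" "{..<s}" Q c] assms(6,9) that c by auto
      also have "... = (\<Sum>k<s. if k = j then c j else 0)"
        by (rule sum.cong) (use assms(9) that in auto)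
      finally show ?thesis using that by simp
    qed
    have "(\<Sum>i\<le>D. w i g) = (\<Sum>j<s. Q j v * e j g)" using fun_cong[OF assms(16), of g] by simp
    also have "... = (\<Sum>j<s. c j * Q j v)" by (rule sum.cong) (auto simp: ej)
    also have "... = g v" using c by simp
    finally show ?thesis .
  qed
  (* Fact F *)
  have F: "w i b = (if i = d then b v else 0)" if "b \<in> Es" "b \<in> hom_polyfns d" "i \<le> D" for b d i
  proof -
    note bE = that(1) and bh = that(2)
    show ?thesis
  proof (cases "i = d")
    case False
    have "w i \<in> dual_part Es i" using assms(15) that(3) by auto
    then show ?thesis using False that(1,2) unfolding dual_part_def by auto
  next
    case True
    have z: "w i' b = 0" if "i' \<le> D" "i' \<noteq> d" for i'
    proof -
      have "w i' \<in> dual_part Es i'" using assms(15) that(1) by auto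
      thus ?thesis using that(2) bE bh unfolding dual_part_def by auto
    qed
    have "(\<Sum>i'\<le>D. w i' b) = (\<Sum>i'\<le>D. if i' = d then w d b else 0)"
      by (rule sum.cong) (auto simp: z)
    also have "... = w d b" using that True by simp
    finally show ?thesis using E[OF bE] True by simp
  qed
  qed
  show ?thesis
  proof (intro allI impI ext)
    fix i f assume iD: "i \<le> D"
    show "dual_act Es \<gamma> (w i) f = \<zeta> ^ i * w i f"
    proof (cases "f \<in> Es")
      case False then show ?thesis using wd[OF iD] unfolding dual_act_def dualsp_def by auto
    next
      case fE: True
      obtain B c where B: "finite B" "B \<subseteq> (\<Union>d. Es \<inter> hom_polyfns d)" "f = (\<lambda>x. \<Sum>b\<in>B. c b * b x)"
        using gsp fE unfolding spanK_def by blast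
      have BE: "\<forall>b\<in>B. b \<in> Es" using B(2) by auto
      have BgE: "\<forall>b\<in>B. (\<lambda>x. b (\<gamma> *v x)) \<in> Es" using BE Esg by auto
      have w1: "w i f = (\<Sum>b\<in>B. c b * w i b)"
        using dual_sum[OF sub wd[OF iD] B(1) BE, of c] B(3) by simp
      have fg: "(\<lambda>x. f (\<gamma> *v x)) = (\<lambda>x. \<Sum>b\<in>B. c b * (\<lambda>b x. b (\<gamma> *v x)) b x)" using B(3) by simp
      have w2: "w i (\<lambda>x. f (\<gamma> *v x)) = (\<Sum>b\<in>B. c b * w i (\<lambda>x. b (\<gamma> *v x)))"
        unfolding fg using dual_sum[OF sub wd[OF iD] B(1), of "\<lambda>b x. b (\<gamma> *v x)" c] BgE by simp
      have wb: "w i (\<lambda>x. b (\<gamma> *v x)) = \<zeta> ^ i * w i b" if bB: "b \<in> B" for b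
      proof -
        obtain d where d: "b \<in> Es" "b \<in> hom_polyfns d" using B(2) bB by auto
        have "w i (\<lambda>x. b (\<gamma> *v x)) = (if i = d then b (\<gamma> *v v) else 0)"
          using F[OF Esg[OF d(1)] hom_subst[OF d(2)] iD] by simp
        also have "... = (if i = d then \<zeta> ^ d * b v else 0)"
          using assms(14) hom_scale[OF d(2)] by simp
        also have "... = \<zeta> ^ i * w i b" using F[OF d iD] by simp
        finally show ?thesis .
      qed
      have "dual_act Es \<gamma> (w i) f = w i (\<lambda>x. f (\<gamma> *v x))"
        unfolding dual_act_def using fE actg by simp
      also have "... = (\<Sum>b\<in>B. c b * (\<zeta> ^ i * w i b))" unfolding w2 by (rule sum.cong) (auto simp: wb)
      also have "... = \<zeta> ^ i * w i f" unfolding w1 by (simp add: sum_distrib_left algebra_simps)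
      finally show ?thesis .
    qed
  qed
qed

end
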